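(* Let $\{E_n\}_{n\ge1}$ be a sequence of diagonal projections such that $\sum_{n\ge1}E_n=I+K$ for some compact operator $K$ (the series converging in the weak, equivalently strong, operator topology). Then there exists an integer $n_0\ge1$ such that: (i) $E_nE_m=\delta_{nm}E_n$ for all $m,n>n_0$; (ii) $E_nE_m$ is a finite-rank projection for all $1\le m,n\le n_0$ with $m\ne n$; (iii) for each $N\ge n_0$, $E^{(N)}=\sum_{n>N}E_n$ is a diagonal projection and $E^{(N)}E_n=0$ for all $n=1,\dots,N$.
   Context: $\mathcal{H}$ is a separable infinite-dimensional complex Hilbert space with a fixed orthonormal basis $\{e_n\}_{n\ge1}$; $\mathcal{D}$ is the algebra of operators diagonal with respect to this basis; a diagonal projection is an orthogonal projection belonging to $\mathcal{D}$. *)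

theory Defs
  imports Complex_Main
begin

text \<open>Concrete model of the separable Hilbert space H = l2(nat) with the
standard orthonormal basis e_k (k :: nat); vectors are square-summable
sequences nat => complex. Operators are maps on sequences, only their
behaviour on l2 is relevant.\<close>

type_synonym vec = "nat \<Rightarrow> complex"
type_synonym hop = "vec \<Rightarrow> vec"

definition l2 :: "vec set" where
  "l2 = {x. summable (\<lambda>k. (cmod (x k))\<^sup>2)}"

definition l2norm :: "vec \<Rightarrow> real" where
  "l2norm x = sqrt (\<Sum>k. (cmod (x k))\<^sup>2)"

definition l2inner :: "vec \<Rightarrow> vec \<Rightarrow> complex" where
  "l2inner x y = (\<Sum>k. x k * cnj (y k))"

definition is_bounded_op :: "hop \<Rightarrow> bool" where
  "is_bounded_op T \<longleftrightarrow>
     (\<forall>x\<in>l2. T x \<in> l2) \<and>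
     (\<forall>x\<in>l2. \<forall>y\<in>l2. \<forall>a b. T (\<lambda>k. a * x k + b * y k) = (\<lambda>k. a * T x k + b * T y k)) \<and>
     (\<exists>C::real. \<forall>x\<in>l2. l2norm (T x) \<le> C * l2norm x)"

definition is_diagonal :: "hop \<Rightarrow> bool" where
  "is_diagonal T \<longleftrightarrow> is_bounded_op T \<and> (\<exists>d. \<forall>x\<in>l2. T x = (\<lambda>k. d k * x k))"

definition is_orth_proj :: "hop \<Rightarrow> bool" where
  "is_orth_proj T \<longleftrightarrow> is_bounded_op T \<and>
     (\<forall>x\<in>l2. T (T x) = T x) \<and>
     (\<forall>x\<in>l2. \<forall>y\<in>l2. l2inner (T x) y = l2inner x (T y))"

definition diag_proj :: "hop \<Rightarrow> bool" where
  "diag_proj T \<longleftrightarrow> is_diagonal T \<and> is_orth_proj T"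

definition finite_rank :: "hop \<Rightarrow> bool" where
  "finite_rank T \<longleftrightarrow> (\<exists>vs :: vec list. \<forall>x\<in>l2. \<exists>c :: nat \<Rightarrow> complex.
      T x = (\<lambda>k. \<Sum>i<length vs. c i * (vs ! i) k))"

text \<open>Compact operator: bounded linear and maps bounded sequences to sequences
with a norm-Cauchy (hence convergent, l2 being complete) subsequence.\<close>
definition compact_op :: "hop \<Rightarrow> bool" where
  "compact_op K \<longleftrightarrow> is_bounded_op K \<and>
     (\<forall>xs :: nat \<Rightarrow> vec. (\<forall>j. xs j \<in> l2) \<and> (\<exists>B::real. \<forall>j. l2norm (xs j) \<le> B) \<longrightarrow>
        (\<exists>r::nat\<Rightarrow>nat. strict_mono r \<and>
           (\<forall>e::real>0. \<exists>M::nat. \<forall>i\<ge>M. \<forall>j\<ge>M. l2norm (\<lambda>k. K (xs (r i)) k - K (xs (r j)) k) < e)))"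

end

theory Submission
  imports Defs "HOL-Analysis.Analysis"
begin

definition ev :: "nat \<Rightarrow> nat \<Rightarrow> complex" where "ev k = (\<lambda>j. if j = k then 1 else 0)"
definition msk :: "nat set \<Rightarrow> (nat \<Rightarrow> complex) \<Rightarrow> nat \<Rightarrow> complex" where
  "msk S x = (\<lambda>k. if k \<in> S then x k else 0)"

lemma ev_l2: "ev k \<in> l2"
proof -
  have "(\<lambda>j. (cmod (ev k j))\<^sup>2) = (\<lambda>j. if j = k then 1 else 0)"
    by (auto simp: ev_def)
  moreover have "summable (\<lambda>j. if j = k then (1::real) else 0)"
    using sums_single[of k "\<lambda>_. (1::real)"] sums_summable by blast
  ultimately show ?thesis by (simp add: l2_def)
qed

lemma ev_norm: "l2norm (ev k) = 1"
proof -
  have "(\<lambda>j. (cmod (ev k j))\<^sup>2) = (\<lambda>j. if j = k then 1 else 0)"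
    by (auto simp: ev_def)
  moreover have "(\<lambda>j. if j = k then (1::real) else 0) sums 1"
    using sums_single[of k "\<lambda>_. (1::real)"] by simp
  ultimately show ?thesis by (simp add: l2norm_def sums_iff)
qed

lemma l2_lin:
  assumes "x \<in> l2" "y \<in> l2"
  shows "(\<lambda>k. a * x k + b * y k) \<in> l2"
proof -
  have s: "summable (\<lambda>k. 2 * (cmod a)\<^sup>2 * (cmod (x k))\<^sup>2 + 2 * (cmod b)\<^sup>2 * (cmod (y k))\<^sup>2)"
    using assms unfolding l2_def
    by (intro summable_add summable_mult) auto
  have "(cmod (a * x k + b * y k))\<^sup>2 \<le> 2 * (cmod a)\<^sup>2 * (cmod (x k))\<^sup>2 + 2 * (cmod b)\<^sup>2 * (cmod (y k))\<^sup>2" for k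
  proof -
    have "cmod (a * x k + b * y k) \<le> cmod a * cmod (x k) + cmod b * cmod (y k)"
      by (metis norm_mult norm_triangle_ineq)
    hence "(cmod (a * x k + b * y k))\<^sup>2 \<le> (cmod a * cmod (x k) + cmod b * cmod (y k))\<^sup>2"
      by (simp add: power_mono)
    also have "\<dots> \<le> 2 * (cmod a * cmod (x k))\<^sup>2 + 2 * (cmod b * cmod (y k))\<^sup>2"
      by (smt (verit) sum_squares_bound zero_le_power2 power2_sum)
    finally show ?thesis by (simp add: power_mult_distrib)
  qed
  then have bnd: "\<forall>k. norm ((cmod (a * x k + b * y k))\<^sup>2) \<le> 2 * (cmod a)\<^sup>2 * (cmod (x k))\<^sup>2 + 2 * (cmod b)\<^sup>2 * (cmod (y k))\<^sup>2"
    by simp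
  show ?thesis unfolding l2_def mem_Collect_eq
    by (rule summable_comparison_test[OF _ s]) (use bnd in blast)
qed

lemma l2_diff:
  assumes "x \<in> l2" "y \<in> l2"
  shows "(\<lambda>k. x k - y k) \<in> l2"
  using l2_lin[OF assms, of 1 "-1"] by simp

lemma comp_le_norm:
  assumes "x \<in> l2" shows "cmod (x a) \<le> l2norm x"
proof -
  have "(cmod (x a))\<^sup>2 \<le> (\<Sum>k. (cmod (x k))\<^sup>2)"
    using sum_le_suminf[of "\<lambda>k. (cmod (x k))\<^sup>2" "{a}"] assms by (auto simp: l2_def)
  then show ?thesis unfolding l2norm_def using real_le_rsqrt by auto
qed

lemma msk_l2: "x \<in> l2 \<Longrightarrow> msk S x \<in> l2"
  unfolding l2_def msk_def mem_Collect_eq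
  by (rule summable_comparison_test[where g="\<lambda>k. (cmod (x k))\<^sup>2"]) auto

lemma msk_norm: "x \<in> l2 \<Longrightarrow> l2norm (msk S x) \<le> l2norm x"
  unfolding l2norm_def
  apply (rule real_sqrt_le_mono)
  apply (rule suminf_le)
  using msk_l2[of x S] by (auto simp: msk_def l2_def)

lemma msk_diag_proj:
  assumes T: "\<forall>x\<in>l2. T x = msk S x"
  shows "diag_proj T"
proof -
  have b: "is_bounded_op T"
    unfolding is_bounded_op_def
  proof (intro conjI ballI allI exI)
    fix x assume "x \<in> l2" then show "T x \<in> l2" using T msk_l2 by simp
  next
    fix x y a b assume "x \<in> l2" "y \<in> l2"
    then show "T (\<lambda>k. a * x k + b * y k) = (\<lambda>k. a * T x k + b * T y k)"
      using T l2_lin[of x y a b] by (auto simp: msk_def)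
  next
    fix x assume "x \<in> l2" then show "l2norm (T x) \<le> 1 * l2norm x" using T msk_norm by simp
  qed
  have d: "is_diagonal T" unfolding is_diagonal_def
    using b T by (intro conjI exI[of _ "\<lambda>k. if k \<in> S then 1 else 0"]) (auto simp: msk_def)
  have o: "is_orth_proj T" unfolding is_orth_proj_def
  proof (intro conjI ballI b)
    fix x assume "x \<in> l2" then show "T (T x) = T x" using T msk_l2 by (auto simp: msk_def)
  next
    fix x y assume "x \<in> l2" "y \<in> l2"
    then show "l2inner (T x) y = l2inner x (T y)" using T
      by (auto simp: l2inner_def msk_def intro!: suminf_cong)
  qed
  show ?thesis using d o by (simp add: diag_proj_def)
qed

lemma msk_finite_rank:
  assumes T: "\<forall>x\<in>l2. T x = msk S x" and S: "S \<subseteq> {..<K}"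
  shows "finite_rank T"
  unfolding finite_rank_def
proof (intro exI[of _ "map ev [0..<K]"] ballI exI[of _ "\<lambda>i. msk S _ i"])
  fix x assume x: "x \<in> l2"
  have "(\<Sum>i<length (map ev [0..<K]). msk S x i * (map ev [0..<K] ! i) k) = (\<Sum>i<K. msk S x i * ev i k)" for k
    by (rule sum.cong) auto
  also have "\<dots> k = (\<Sum>i<K. if i = k then msk S x k else 0)" for k
    by (rule sum.cong) (auto simp: ev_def)
  also have "\<dots> k = msk S x k" for k
    using S by (auto simp: msk_def)
  finally show "T x = (\<lambda>k. \<Sum>i<length (map ev [0..<K]). msk S x i * (map ev [0..<K] ! i) k)"
    using T x by auto
qed

lemma ab_le: "0 \<le> (a::real) \<Longrightarrow> 0 \<le> b \<Longrightarrow> a*b \<le> a\<^sup>2+b\<^sup>2"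
proof -
  assume "0 \<le> a" "0 \<le> b"
  have "0 \<le> (a-b)\<^sup>2" by simp
  hence "2*a*b \<le> a\<^sup>2+b\<^sup>2" by (simp add: power2_diff)
  moreover have "0 \<le> a*b" using \<open>0\<le>a\<close> \<open>0\<le>b\<close> by simp
  ultimately show ?thesis by linarith
qed

lemma inner_infsum:
  assumes "x \<in> l2" "y \<in> l2"
  shows "l2inner (msk A x) y = infsum (\<lambda>k. x k * cnj (y k)) A"
    and "(\<lambda>k. x k * cnj (y k)) summable_on A"
proof -
  define f where "f k = x k * cnj (y k)" for k
  have sn: "summable (\<lambda>k. norm (f k))"
  proof (rule summable_comparison_test[where g="\<lambda>k. ((cmod (x k))\<^sup>2 + (cmod (y k))\<^sup>2)"])
    show "summable (\<lambda>k. (cmod (x k))\<^sup>2 + (cmod (y k))\<^sup>2)"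
      using assms unfolding l2_def mem_Collect_eq by (intro summable_add)
    have "norm (norm (f n)) \<le> (cmod (x n))\<^sup>2 + (cmod (y n))\<^sup>2" for n
      using ab_le[of "cmod (x n)" "cmod (y n)"] by (simp add: f_def norm_mult)
    then show "\<exists>N. \<forall>n\<ge>N. norm (norm (f n)) \<le> (cmod (x n))\<^sup>2 + (cmod (y n))\<^sup>2"
      by blast
  qed
  define g where "g k = (if k \<in> A then f k else 0)" for k
  have sg: "summable (\<lambda>k. norm (g k))"
    by (rule summable_comparison_test[OF _ sn]) (auto simp: g_def)
  hence "g sums suminf g" using summable_norm_cancel summable_sums by blast
  hence hg: "(g has_sum suminf g) UNIV" using norm_summable_imp_has_sum sg by blast
  have "(f has_sum suminf g) A \<longleftrightarrow> (g has_sum suminf g) UNIV"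
    by (rule has_sum_cong_neutral) (auto simp: g_def)
  with hg have h: "(f has_sum suminf g) A" by blast
  have "l2inner (msk A x) y = suminf g"
    unfolding l2inner_def msk_def g_def f_def by (intro arg_cong[where f=suminf] ext) auto
  then show "l2inner (msk A x) y = infsum (\<lambda>k. x k * cnj (y k)) A"
    using infsumI[OF h] unfolding f_def by simp
  show "(\<lambda>k. x k * cnj (y k)) summable_on A" using h unfolding f_def summable_on_def by blast
qed

theorem lemma3p5:
  fixes E :: "nat \<Rightarrow> hop"
  assumes proj: "\<And>n. n \<ge> 1 \<Longrightarrow> diag_proj (E n)"
    and sum: "\<exists>Kc. compact_op Kc \<and>
       (\<forall>x\<in>l2. \<forall>y\<in>l2. (\<lambda>n. l2inner (E (Suc n) x) y) sums l2inner (\<lambda>k. x k + Kc x k) y)"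
  shows "\<exists>n0::nat. n0 \<ge> 1 \<and>
    (\<forall>n m. n > n0 \<and> m > n0 \<longrightarrow>
       (\<forall>x\<in>l2. E n (E m x) = (if n = m then E n x else (\<lambda>k. 0)))) \<and>
    (\<forall>n m. 1 \<le> n \<and> n \<le> n0 \<and> 1 \<le> m \<and> m \<le> n0 \<and> m \<noteq> n \<longrightarrow>
       is_orth_proj (\<lambda>x. E n (E m x)) \<and> finite_rank (\<lambda>x. E n (E m x))) \<and>
    (\<forall>N\<ge>n0. \<exists>P. diag_proj P \<and>
       (\<forall>x\<in>l2. \<forall>y\<in>l2. (\<lambda>n. l2inner (E (n + Suc N) x) y) sums l2inner (P x) y) \<and>
       (\<forall>n. 1 \<le> n \<and> n \<le> N \<longrightarrow> (\<forall>x\<in>l2. P (E n x) = (\<lambda>k. 0))))"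
proof -
  define S where "S n = {k. E n (ev k) k = 1}" for n
  have ES: "E n x = msk (S n) x" if "n \<ge> 1" "x \<in> l2" for n x
  proof -
    have dp: "diag_proj (E n)" using proj that(1) by blast
    then obtain d where d: "\<forall>x\<in>l2. E n x = (\<lambda>k. d k * x k)" and bo: "is_bounded_op (E n)"
      and idm: "\<forall>x\<in>l2. E n (E n x) = E n x"
      unfolding diag_proj_def is_diagonal_def is_orth_proj_def by blast
    have dk: "E n (ev k) = (\<lambda>j. d j * ev k j)" for k using d ev_l2 by blast
    have dkk: "E n (ev k) k = d k" for k using dk by (simp add: ev_def)
    have d01: "d k = 0 \<or> d k = 1" for k
    proof -
      have "E n (ev k) \<in> l2" using bo ev_l2 unfolding is_bounded_op_def by blast
      hence "E n (E n (ev k)) = (\<lambda>j. d j * E n (ev k) j)" using d by blast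
      hence "E n (E n (ev k)) k = d k * d k" using dkk by simp
      moreover have "E n (E n (ev k)) k = d k" using idm ev_l2 dkk by simp
      ultimately have "d k * d k = d k" by simp
      thus ?thesis by (metis mult_cancel_right1)
    qed
    have "d k * x k = msk (S n) x k" for k using d01[of k] dkk[of k] by (auto simp: msk_def S_def)
    thus ?thesis using d that(2) by auto
  qed
  obtain Kc where cK: "compact_op Kc" and sK: "\<forall>x\<in>l2. \<forall>y\<in>l2. (\<lambda>n. l2inner (E (Suc n) x) y) sums l2inner (\<lambda>k. x k + Kc x k) y"
    using sum by blast
  define F where "F k = {n. k \<in> S (Suc n)}" for k
  have inner_ev: "l2inner (msk A (ev k)) (ev k) = (if k \<in> A then 1 else 0)" for A k
  proof -
    have "(\<lambda>j. msk A (ev k) j * cnj (ev k j)) = (\<lambda>j. if j = k then (if k \<in> A then 1 else 0) else 0)"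
      by (auto simp: msk_def ev_def)
    then show ?thesis
      using sums_single[of k "\<lambda>_. if k \<in> A then 1 else (0::complex)"] by (simp add: l2inner_def sums_iff)
  qed
  have inner_K: "l2inner (\<lambda>j. ev k j + Kc (ev k) j) (ev k) = 1 + Kc (ev k) k" for k
  proof -
    have "(\<lambda>j. (ev k j + Kc (ev k) j) * cnj (ev k j)) = (\<lambda>j. if j = k then 1 + Kc (ev k) k else 0)"
      by (auto simp: ev_def)
    then show ?thesis
      using sums_single[of k "\<lambda>_. 1 + Kc (ev k) k"] by (simp add: l2inner_def sums_iff)
  qed
  have ser: "(\<lambda>n. if n \<in> F k then 1 else 0 :: complex) sums (1 + Kc (ev k) k)" for k
  proof -
    have eq: "l2inner (E (Suc n) (ev k)) (ev k) = (if n \<in> F k then 1 else 0)" for n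
      using ES[of "Suc n" "ev k"] ev_l2 inner_ev by (simp add: F_def)
    have "(\<lambda>n. l2inner (E (Suc n) (ev k)) (ev k)) sums l2inner (\<lambda>j. ev k j + Kc (ev k) j) (ev k)"
      using sK ev_l2 by blast
    then show ?thesis by (simp only: eq inner_K)
  qed
  have finF: "finite (F k)" for k
  proof -
    from ser have "(\<lambda>n. if n \<in> F k then 1 else 0 :: complex) \<longlonglongrightarrow> 0"
      using summable_LIMSEQ_zero sums_summable by blast
    then have "eventually (\<lambda>n. dist (if n \<in> F k then 1 else 0 :: complex) 0 < 1/2) sequentially"
      using tendsto_iff by (metis half_gt_zero zero_less_one)
    then obtain N where N: "\<forall>n\<ge>N. dist (if n \<in> F k then 1 else 0 :: complex) 0 < 1/2"
      by (auto simp: eventually_sequentially)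
    have "F k \<subseteq> {..<N}"
    proof
      fix n assume n: "n \<in> F k"
      show "n \<in> {..<N}"
      proof (rule ccontr)
        assume "n \<notin> {..<N}" hence "n \<ge> N" by simp
        with N n show False by auto
      qed
    qed
    thus ?thesis by (rule finite_subset) simp
  qed
  have cardF: "1 + Kc (ev k) k = of_nat (card (F k))" for k
    using sums_unique2[OF ser sums_If_finite_set[OF finF[of k], where f="\<lambda>_. 1::complex"]] by simp
  have bK: "is_bounded_op Kc" using cK compact_op_def by blast
  have Kl2: "Kc x \<in> l2" if "x \<in> l2" for x using bK that unfolding is_bounded_op_def by blast
  have fin1: "finite {k. card (F k) \<noteq> 1}"
  proof (rule ccontr)
    define A where "A = {k. card (F k) \<noteq> 1}"
    assume "infinite {k. card (F k) \<noteq> 1}"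
    hence unb: "\<forall>m. \<exists>n\<ge>m. n \<in> A" using infinite_nat_iff_unbounded_le A_def by auto
    define s where "s j = (SOME k. k \<ge> j \<and> k \<in> A)" for j
    have s: "s j \<ge> j \<and> s j \<in> A" for j
      unfolding s_def by (rule someI_ex[of "\<lambda>k. k \<ge> j \<and> k \<in> A"]) (use unb in blast)
    have big: "cmod (Kc (ev k) k) \<ge> 1" if "k \<in> A" for k
    proof -
      have e1: "Kc (ev k) k = complex_of_real (real (card (F k)) - 1)"
        using cardF[of k] by (metis add_diff_cancel_left' of_real_diff of_real_of_nat_eq of_real_1)
      have "card (F k) \<noteq> 1" using that A_def by simp
      hence "\<bar>real (card (F k)) - 1\<bar> \<ge> 1" by (cases "card (F k)") auto
      thus ?thesis by (simp only: e1 norm_of_real)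
    qed
    have "(\<forall>j. ev (s j) \<in> l2) \<and> (\<exists>B::real. \<forall>j. l2norm (ev (s j)) \<le> B)"
      using ev_l2 ev_norm by auto
    moreover have "(\<forall>j. ev (s j) \<in> l2) \<and> (\<exists>B::real. \<forall>j. l2norm (ev (s j)) \<le> B) \<longrightarrow>
        (\<exists>r::nat\<Rightarrow>nat. strict_mono r \<and>
           (\<forall>e::real>0. \<exists>M::nat. \<forall>i\<ge>M. \<forall>j\<ge>M. l2norm (\<lambda>k. Kc (ev (s (r i))) k - Kc (ev (s (r j))) k) < e))"
      using cK unfolding compact_op_def by (rule conjunct2[THEN spec])
    ultimately obtain r where r: "strict_mono r" and
      cau: "\<forall>e::real>0. \<exists>M::nat. \<forall>i\<ge>M. \<forall>j\<ge>M. l2norm (\<lambda>k. Kc (ev (s (r i))) k - Kc (ev (s (r j))) k) < e"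
      by blast
    obtain M where M: "\<forall>i\<ge>M. \<forall>j\<ge>M. l2norm (\<lambda>k. Kc (ev (s (r i))) k - Kc (ev (s (r j))) k) < 1/2"
      using cau by (meson half_gt_zero zero_less_one)
    define b where "b = s (r M)"
    define v where "v = Kc (ev b)"
    have vl2: "v \<in> l2" using Kl2 ev_l2 v_def by simp
    have "(\<lambda>a. (cmod (v a))\<^sup>2) \<longlonglongrightarrow> 0" using vl2 unfolding l2_def mem_Collect_eq by (rule summable_LIMSEQ_zero)
    then have "eventually (\<lambda>a. dist ((cmod (v a))\<^sup>2) 0 < 1/4) sequentially"
      using tendsto_iff by (metis divide_pos_pos zero_less_numeral zero_less_one)
    then obtain T where T: "\<forall>a\<ge>T. dist ((cmod (v a))\<^sup>2) 0 < 1/4"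
      by (auto simp: eventually_sequentially)
    define i where "i = max M T"
    define a where "a = s (r i)"
    have "a \<ge> T" using s[of "r i"] seq_suble[OF r, of i] unfolding a_def i_def by linarith
    hence "(cmod (v a))\<^sup>2 < (1/2)\<^sup>2" using T by (simp add: power2_eq_square)
    hence va: "cmod (v a) < 1/2" by (rule power_less_imp_less_base) simp
    have ln: "l2norm (\<lambda>k. Kc (ev a) k - v k) < 1/2" using M unfolding i_def a_def v_def b_def by auto
    have "cmod (Kc (ev a) a - v a) \<le> l2norm (\<lambda>k. Kc (ev a) k - v k)"
      using comp_le_norm[OF l2_diff[OF Kl2[OF ev_l2] vl2]] by simp
    moreover have "cmod (Kc (ev a) a) \<le> cmod (Kc (ev a) a - v a) + cmod (v a)"
      by (metis diff_add_cancel norm_triangle_ineq)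
    ultimately have "cmod (Kc (ev a) a) < 1" using ln va by linarith
    with big[of a] s[of "r i"] show False unfolding a_def by simp
  qed
  obtain k0 where k0: "{k. card (F k) \<noteq> 1} \<subseteq> {..<k0}" using finite_nat_bounded[OF fin1] by blast
  have one: "card (F k) = 1" if "k \<ge> k0" for k using k0 that by force
  have two: "k < k0" if "n \<ge> 1" "m \<ge> 1" "n \<noteq> m" "k \<in> S n" "k \<in> S m" for n m k
  proof (rule ccontr)
    assume "\<not> k < k0" hence c1: "card (F k) = 1" using one by simp
    have "Suc (n - 1) = n" "Suc (m - 1) = m" using that by auto
    hence "{n-1, m-1} \<subseteq> F k" using that unfolding F_def by auto
    hence "card {n-1, m-1} \<le> card (F k)" using finF card_mono by blast
    moreover have "card {n-1,m-1} = 2" using that by auto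
    ultimately show False using c1 by simp
  qed
  have finG: "finite (\<Union>k<k0. F k)" using finF by auto
  obtain Nb where Nb: "(\<Union>k<k0. F k) \<subseteq> {..<Nb}" using finite_nat_bounded[OF finG] by blast
  define n0 where "n0 = Suc Nb"
  have hi: "k \<ge> k0" if "n > n0" "k \<in> S n" for n k
  proof (rule ccontr)
    assume "\<not> k0 \<le> k"
    moreover have "Suc (n - 1) = n" using that n0_def by auto
    ultimately have "n - 1 \<in> F k" "k < k0" using that unfolding F_def by auto
    hence "n - 1 < Nb" using Nb by blast
    thus False using that n0_def by simp
  qed
  have disj: "S n \<inter> S m = {}" if "n \<ge> 1" "m \<ge> 1" "n \<noteq> m" "n > n0 \<or> m > n0" for n m
    using two[OF that(1-3)] hi that(4) by fastforce
  show ?thesis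
  proof (intro exI[of _ n0] conjI)
    show "1 \<le> n0" by (simp add: n0_def)
  next
    show "\<forall>n m. n > n0 \<and> m > n0 \<longrightarrow>
       (\<forall>x\<in>l2. E n (E m x) = (if n = m then E n x else (\<lambda>k. 0)))"
    proof (intro allI impI ballI)
      fix n m x assume nm: "n0 < n \<and> n0 < m" and x: "x \<in> l2"
      have n1: "n \<ge> 1" "m \<ge> 1" using nm n0_def by auto
      have "E m x = msk (S m) x" using ES n1 x by auto
      moreover have "msk (S m) x \<in> l2" using msk_l2 x .
      ultimately have e: "E n (E m x) = msk (S n) (msk (S m) x)" using ES n1 by auto
      show "E n (E m x) = (if n = m then E n x else (\<lambda>k. 0))"
      proof (cases "n = m")
        case True
        then show ?thesis using e ES[of n x] n1 x by (auto simp: msk_def)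
      next
        case False
        then show ?thesis using e disj[of n m] n1 nm by (auto simp: msk_def fun_eq_iff)
      qed
    qed
  next
    show "\<forall>n m. 1 \<le> n \<and> n \<le> n0 \<and> 1 \<le> m \<and> m \<le> n0 \<and> m \<noteq> n \<longrightarrow>
       is_orth_proj (\<lambda>x. E n (E m x)) \<and> finite_rank (\<lambda>x. E n (E m x))"
    proof (intro allI impI)
      fix n m assume nm: "1 \<le> n \<and> n \<le> n0 \<and> 1 \<le> m \<and> m \<le> n0 \<and> m \<noteq> n"
      have Q: "\<forall>x\<in>l2. (\<lambda>x. E n (E m x)) x = msk (S n \<inter> S m) x"
      proof
        fix x assume x: "x \<in> l2"
        have "E m x = msk (S m) x" using ES nm x by auto
        moreover have "msk (S m) x \<in> l2" using msk_l2 x .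
        ultimately have e: "E n (E m x) = msk (S n) (msk (S m) x)" using ES nm by auto
        then show "(\<lambda>x. E n (E m x)) x = msk (S n \<inter> S m) x" by (auto simp: msk_def)
      qed
      have sub: "S n \<inter> S m \<subseteq> {..<k0}" using two nm by blast
      show "is_orth_proj (\<lambda>x. E n (E m x)) \<and> finite_rank (\<lambda>x. E n (E m x))"
        using msk_diag_proj[OF Q] msk_finite_rank[OF Q sub] by (simp add: diag_proj_def)
    qed
  next
    show "\<forall>N\<ge>n0. \<exists>P. diag_proj P \<and>
       (\<forall>x\<in>l2. \<forall>y\<in>l2. (\<lambda>n. l2inner (E (n + Suc N) x) y) sums l2inner (P x) y) \<and>
       (\<forall>n. 1 \<le> n \<and> n \<le> N \<longrightarrow> (\<forall>x\<in>l2. P (E n x) = (\<lambda>k. 0)))"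
    proof (intro allI impI)
      fix N assume N: "n0 \<le> N"
      define B where "B n = S (n + Suc N)" for n
      define U where "U = (\<Union>n. B n)"
      have dB: "B n \<inter> B m = {}" if "n \<noteq> m" for n m
        using disj[of "n + Suc N" "m + Suc N"] that N n0_def by (simp add: B_def)
      show "\<exists>P. diag_proj P \<and>
       (\<forall>x\<in>l2. \<forall>y\<in>l2. (\<lambda>n. l2inner (E (n + Suc N) x) y) sums l2inner (P x) y) \<and>
       (\<forall>n. 1 \<le> n \<and> n \<le> N \<longrightarrow> (\<forall>x\<in>l2. P (E n x) = (\<lambda>k. 0)))"
      proof (intro exI[of _ "msk U"] conjI allI impI ballI)
        show "diag_proj (msk U)" by (rule msk_diag_proj[where S=U]) simp
      next
        fix x y assume x: "x \<in> l2" and y: "y \<in> l2"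
        define f where "f = (\<lambda>k. x k * cnj (y k))"
        have "f summable_on U" unfolding f_def by (rule inner_infsum(2)[OF x y])
        hence h: "(f has_sum infsum f U) U" by simp
        have U: "U = snd ` Sigma UNIV B" unfolding U_def by force
        have inj: "inj_on snd (Sigma UNIV B)" using dB by (auto simp: inj_on_def)
        have h1: "((f \<circ> snd) has_sum infsum f U) (Sigma UNIV B)"
          using h U has_sum_reindex[OF inj] by metis
        have h2: "((\<lambda>k. (f \<circ> snd) (n, k)) has_sum infsum f (B n)) (B n)" for n
          using inner_infsum(2)[OF x y, of "B n"] unfolding f_def by (simp add: o_def)
        have "((\<lambda>n. infsum f (B n)) has_sum infsum f U) UNIV"
          by (rule has_sum_SigmaD[OF h1 h2])
        hence "(\<lambda>n. infsum f (B n)) sums infsum f U" by (rule has_sum_imp_sums)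
        moreover have "l2inner (E (n + Suc N) x) y = infsum f (B n)" for n
          using ES[of "n + Suc N" x] x inner_infsum(1)[OF x y] unfolding B_def f_def by simp
        moreover have "l2inner (msk U x) y = infsum f U" using inner_infsum(1)[OF x y] unfolding f_def by simp
        ultimately show "(\<lambda>n. l2inner (E (n + Suc N) x) y) sums l2inner (msk U x) y" by simp
      next
        fix n x assume n: "1 \<le> n \<and> n \<le> N" and x: "x \<in> l2"
        have "B m \<inter> S n = {}" for m
          using disj[of "m + Suc N" n] n N n0_def by (auto simp: B_def)
        hence "U \<inter> S n = {}" unfolding U_def by blast
        then show "msk U (E n x) = (\<lambda>k. 0)" using ES[of n x] n x by (auto simp: msk_def fun_eq_iff)
      qed
    qed
  qed
qed

end
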